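(* Let $\theta=(\alpha,-(\alpha+\gamma)/4,\gamma)$ with $(\alpha,\gamma)$ in the fourth quadrant of the real $\alpha\gamma$-plane, and let $\mathcal{R}_{\theta}(1)$ be the moduli space of $\theta$-semistable representations of the quiver $\mathbf{Q}$ (with relations $\phi_i\eta_j+\phi_j\eta_i=0$) of dimension vector $(1,4,1)$. If $\gamma<-\alpha$, then $\mathcal{R}_{\theta}(1)$ consists exactly of the (orbits of) globally surjective representations which are locally injective; if $\gamma>-\alpha$, then $\mathcal{R}_{\theta}(1)$ consists exactly of the (orbits of) globally injective representations which are locally surjective.
   Context: $\mathbf{Q}$ is the quiver with three vertices $-1,0,1$, four arrows $\eta_0,\dots,\eta_3$ from vertex $-1$ to vertex $0$ and four arrows $\phi_0,\dots,\phi_3$ from vertex $0$ to vertex $1$. A representation $R$ with maps $f_{\eta_i}$, $g_{\phi_i}$ satisfies the relations if $g_{\phi_i}f_{\eta_j}+g_{\phi_j}f_{\eta_i}=0$ for $0\le i\le j\le 3$. $R$ is globally (resp. locally) injective if $\sum\lambda_i f_{\eta_i}$ is injective for every $(\lambda_0,\dots,\lambda_3)\in\mathbb{C}^4\setminus\{0\}$ (resp. away from a subset of codimension at least 2); globally (resp. locally) surjective is defined analogously with $\sum\lambda_i g_{\phi_i}$ surjective. A representation $V$ is $\theta$-semistable (resp. $\theta$-stable) if $\theta\cdot\dim V=0$ and $\theta\cdot\dim V'\le0$ (resp. $<0$) for every nonzero proper subrepresentation $V'$. *)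

theory Defs
  imports "HOL-Analysis.Analysis"
begin

text \<open>Representations of the quiver Q (vertices -1, 0, 1; arrows eta_0..eta_3 from -1 to 0,
  arrows phi_0..phi_3 from 0 to 1) of dimension vector (1,4,1).  The vector spaces at the
  vertices are complex^1, complex^4, complex^1; arrows are indexed by the type 4;
  the map of eta_i is the 4x1 matrix f i, the map of phi_i is the 1x4 matrix g i.\<close>

type_synonym rep141 = "(4 \<Rightarrow> complex^1^4) \<times> (4 \<Rightarrow> complex^4^1)"

definition satisfies_relations :: "rep141 \<Rightarrow> bool" where
  "satisfies_relations R \<longleftrightarrow>
     (\<forall>i j. (snd R i ** fst R j) + (snd R j ** fst R i) = 0)"

text \<open>The linear combinations sum lambda_i f_eta_i and sum lambda_i g_phi_i, as linear maps.\<close>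

definition comb_f :: "rep141 \<Rightarrow> complex^4 \<Rightarrow> complex^1 \<Rightarrow> complex^4" where
  "comb_f R l = (\<lambda>v. \<Sum>i\<in>UNIV. (l $ i) *s (fst R i *v v))"

definition comb_g :: "rep141 \<Rightarrow> complex^4 \<Rightarrow> complex^4 \<Rightarrow> complex^1" where
  "comb_g R l = (\<lambda>v. \<Sum>i\<in>UNIV. (l $ i) *s (snd R i *v v))"

definition globally_injective :: "rep141 \<Rightarrow> bool" where
  "globally_injective R \<longleftrightarrow> (\<forall>l::complex^4. l \<noteq> 0 \<longrightarrow> inj (comb_f R l))"

definition globally_surjective :: "rep141 \<Rightarrow> bool" where
  "globally_surjective R \<longleftrightarrow> (\<forall>l::complex^4. l \<noteq> 0 \<longrightarrow> surj (comb_g R l))"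

text \<open>Codimension at least 2 in the parameter space C^4 (equivalently in P^3).  For dimension
  vector (1,4,1) the locus where injectivity/surjectivity fails is (the nonzero part of) a
  linear subspace of C^4, so it lies in a subset of codimension >= 2 iff it lies in a
  linear subspace of dimension <= 2.\<close>

definition codim_ge2_linear :: "(complex^4) set \<Rightarrow> bool" where
  "codim_ge2_linear Z \<longleftrightarrow> vec.subspace Z \<and> vec.dim Z \<le> 2"

definition locally_injective :: "rep141 \<Rightarrow> bool" where
  "locally_injective R \<longleftrightarrow>
     (\<exists>Z. codim_ge2_linear Z \<and> (\<forall>l::complex^4. l \<noteq> 0 \<and> l \<notin> Z \<longrightarrow> inj (comb_f R l)))"

definition locally_surjective :: "rep141 \<Rightarrow> bool" where
  "locally_surjective R \<longleftrightarrow>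
     (\<exists>Z. codim_ge2_linear Z \<and> (\<forall>l::complex^4. l \<noteq> 0 \<and> l \<notin> Z \<longrightarrow> surj (comb_g R l)))"

text \<open>Subrepresentations: triples of subspaces stable under all arrows.\<close>

definition is_subrep :: "rep141 \<Rightarrow> (complex^1) set \<Rightarrow> (complex^4) set \<Rightarrow> (complex^1) set \<Rightarrow> bool" where
  "is_subrep R W1 W0 W2 \<longleftrightarrow>
     vec.subspace W1 \<and> vec.subspace W0 \<and> vec.subspace W2 \<and>
     (\<forall>i. \<forall>w\<in>W1. fst R i *v w \<in> W0) \<and>
     (\<forall>i. \<forall>w\<in>W0. snd R i *v w \<in> W2)"

definition theta_dot :: "real \<times> real \<times> real \<Rightarrow> nat \<times> nat \<times> nat \<Rightarrow> real" where
  "theta_dot th d = fst th * real (fst d) + fst (snd th) * real (fst (snd d))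
                    + snd (snd th) * real (snd (snd d))"

definition theta_semistable :: "real \<times> real \<times> real \<Rightarrow> rep141 \<Rightarrow> bool" where
  "theta_semistable th R \<longleftrightarrow>
     theta_dot th (1, 4, 1) = 0 \<and>
     (\<forall>W1 W0 W2. is_subrep R W1 W0 W2
        \<and> \<not> (W1 = {0} \<and> W0 = {0} \<and> W2 = {0})
        \<and> \<not> (W1 = UNIV \<and> W0 = UNIV \<and> W2 = UNIV)
        \<longrightarrow> theta_dot th (vec.dim W1, vec.dim W0, vec.dim W2) \<le> 0)"

end

theory Submission
  imports Defs
begin

definition Am :: "rep141 \<Rightarrow> complex^4^4" where "Am R = (\<chi> k j. fst R j $ k $ 1)"
definition Bm :: "rep141 \<Rightarrow> complex^4^4" where "Bm R = (\<chi> i k. snd R i $ 1 $ k)"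

lemma nz1: "(w::complex^1) \<noteq> 0 \<Longrightarrow> w $ 1 \<noteq> 0"
  by (simp add: vec_eq_iff)

lemma sub1: assumes "vec.subspace (S::(complex^1) set)" "S \<noteq> {0}" shows "S = UNIV"
proof -
  obtain w where w: "w \<in> S" "w \<noteq> 0" using assms vec.subspace_0 by blast
  have "x \<in> S" for x
  proof -
    have "x = (x$1 / w$1) *s w" using nz1[OF w(2)] by (simp add: vec_eq_iff)
    then show ?thesis using vec.subspace_scale[OF assms(1) w(1)] by metis
  qed
  then show ?thesis by blast
qed

lemma comb_f_eq: "comb_f R l v = (v$1) *s (Am R *v l)"
  by (simp add: vec_eq_iff comb_f_def matrix_vector_mult_def Am_def sum_1 sum_distrib_left mult_ac)

lemma inj_comb_f: "inj (comb_f R l) \<longleftrightarrow> Am R *v l \<noteq> 0"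
proof
  assume i: "inj (comb_f R l)"
  show "Am R *v l \<noteq> 0"
  proof
    assume "Am R *v l = 0"
    then have "comb_f R l 0 = comb_f R l 1" by (simp add: comb_f_eq)
    then have "(0::complex^1) = 1" using i by (meson injD)
    then show False by (simp add: vec_eq_iff)
  qed
next
  assume "Am R *v l \<noteq> 0"
  then show "inj (comb_f R l)"
    by (auto simp: inj_def comb_f_eq vec_eq_iff)
qed

lemma comb_g_eq: "comb_g R l v = (\<chi> _. \<Sum>k\<in>UNIV. (transpose (Bm R) *v l)$k * v$k)"
  apply (simp add: vec_eq_iff comb_g_def matrix_vector_mult_def Bm_def transpose_def sum_distrib_left
      sum_distrib_right mult_ac sum_1)
  by (rule sum.swap)

lemma surj_comb_g: "surj (comb_g R l) \<longleftrightarrow> transpose (Bm R) *v l \<noteq> 0"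
proof
  assume s: "surj (comb_g R l)"
  show "transpose (Bm R) *v l \<noteq> 0"
  proof
    assume "transpose (Bm R) *v l = 0"
    then have "comb_g R l v = 0" for v by (simp add: comb_g_eq vec_eq_iff)
    moreover obtain v where "comb_g R l v = 1" using s by (metis surj_def)
    ultimately show False by simp
  qed
next
  assume "transpose (Bm R) *v l \<noteq> 0"
  then obtain k where k: "(transpose (Bm R) *v l) $ k \<noteq> 0" by (auto simp: vec_eq_iff)
  show "surj (comb_g R l)"
  proof (rule surjI)
    fix y :: "complex^1"
    show "comb_g R l (axis k (y$1 / (transpose (Bm R) *v l) $ k)) = y"
      using k by (simp add: comb_g_eq vec_eq_iff axis_def if_distrib cong: if_cong)
  qed
qed

lemma rel_eq: "satisfies_relations R \<Longrightarrow> (Bm R ** Am R) $ i $ j + (Bm R ** Am R) $ j $ i = 0"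
  unfolding satisfies_relations_def
  apply (drule spec[of _ i], drule spec[of _ j])
  apply (simp add: vec_eq_iff matrix_matrix_mult_def Am_def Bm_def sum_1)
  done

lemma fst_act: "fst R i *v w = (w$1) *s column i (Am R)"
  by (simp add: vec_eq_iff matrix_vector_mult_def column_def Am_def sum_1 mult_ac)

lemma snd_act: "snd R i *v w = (\<chi> _. (Bm R *v w) $ i)"
  by (simp add: vec_eq_iff matrix_vector_mult_def Bm_def sum_1)

lemma sum_delta_mult: "(\<Sum>j\<in>UNIV. (if (a::4) = j then 1 else 0) * (f j::complex)) = f a"
proof -
  have "(\<Sum>j\<in>UNIV. (if a = j then 1 else 0) * f j) = (\<Sum>j\<in>UNIV. if a = j then f j else 0)"
    by (rule sum.cong) auto
  then show ?thesis by (simp add: sum.delta')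
qed

lemma mvb: "(A::complex^4^4) *v axis k 1 = column k A"
proof -
  have "(\<Sum>j\<in>UNIV. A $ i $ j * (if j = k then 1 else 0)) = A $ i $ k" for i
  proof -
    have "(\<Sum>j\<in>UNIV. A $ i $ j * (if j = k then 1 else 0)) = (\<Sum>j\<in>UNIV. if j = k then A $ i $ j else 0)"
      by (rule sum.cong) auto
    then show ?thesis by simp
  qed
  then show ?thesis by (simp add: vec_eq_iff matrix_vector_mult_def column_def axis_def)
qed

lemma sum_two:
  fixes z :: "complex^4"
  assumes "i \<noteq> j" "\<forall>k. k \<noteq> i \<and> k \<noteq> j \<longrightarrow> z$k = 0"
  shows "(\<Sum>k\<in>UNIV. c k * z$k) = c i * z$i + c j * z$j"
proof -
  have "(\<Sum>k\<in>UNIV. c k * z$k) = (\<Sum>k\<in>{i,j}. c k * z$k)"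
    by (rule sum.mono_neutral_right) (use assms in auto)
  then show ?thesis using assms by simp
qed

lemma skew_null:
  fixes M :: "complex^4^4"
  assumes sk: "\<forall>i j. M$i$j + M$j$i = 0" and nz: "M \<noteq> 0"
  shows "vec.dim {l. M *v l = 0} \<le> 2"
proof -
  obtain i j where ij: "M$i$j \<noteq> 0" using nz by (auto simp: vec_eq_iff)
  have diag: "M$k$k = 0" for k 
  proof -
    have "2 * M$k$k = 0" using sk by (metis mult_2)
    then show ?thesis by simp
  qed
  have inej: "i \<noteq> j" using ij diag by auto
  have mji: "M$j$i \<noteq> 0" using sk ij by (metis add.comm_neutral add_eq_0_iff)
  define D :: "complex^4^4" where "D = (\<chi> a b. if a = b \<and> a \<noteq> i \<and> a \<noteq> j then 1 else 0)"
  have DN: "D *v l = (\<chi> k. if k = i \<or> k = j then 0 else l$k)" for l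
    by (auto simp: vec_eq_iff matrix_vector_mult_def D_def sum_delta_mult)
  define N where "N = {l. M *v l = 0}"
  have subN: "vec.subspace N" unfolding N_def by (rule vec.subspace_kernel)
  have spanN: "vec.span N = N" using subN by (simp add: vec.span_eq_iff)
  have inj: "inj_on ((*v) D) (vec.span N)"
  proof (rule inj_onI)
    fix x y assume x: "x \<in> vec.span N" and y: "y \<in> vec.span N" and e: "D *v x = D *v y"
    define z where "z = x - y"
    have Mz: "M *v z = 0" using x y spanN unfolding z_def N_def by (simp add: matrix_vector_mult_diff_distrib)
    have zk: "\<forall>k. k \<noteq> i \<and> k \<noteq> j \<longrightarrow> z$k = 0"
      using e unfolding z_def by (auto simp: DN vec_eq_iff) (metis)
    have "(M *v z)$j = M$j$i * z$i + M$j$j * z$j"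
      unfolding matrix_vector_mult_def using sum_two[OF inej zk, of "\<lambda>k. M$j$k"] by simp
    then have zi: "z$i = 0" using Mz diag mji by simp
    have "(M *v z)$i = M$i$j * z$j + M$i$i * z$i"
      unfolding matrix_vector_mult_def using sum_two[OF inej[symmetric], of z "\<lambda>k. M$i$k"] zk by auto
    then have zj: "z$j = 0" using Mz diag ij by simp
    have "z = 0" using zk zi zj by (auto simp: vec_eq_iff)
    then show "x = y" unfolding z_def by simp
  qed
  have "vec.dim N = vec.dim ((*v) D ` N)"
    using vec.dim_image_eq[OF matrix_vector_mul_linear_gen inj] by simp
  also have "\<dots> \<le> vec.dim {x::complex^4. \<forall>k. k \<notin> (UNIV - {i,j}) \<longrightarrow> x$k = 0}"
    by (rule vec.dim_subset) (auto simp: DN)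
  also have "\<dots> = card (UNIV - {i,j} :: 4 set)" by (rule dim_substandard_cart)
  also have "\<dots> = 2" using inej by (simp add: card_Diff_subset)
  finally show ?thesis unfolding N_def by simp
qed

lemma codim_nonfull: assumes "codim_ge2_linear Z" shows "\<exists>l. l \<noteq> 0 \<and> l \<notin> Z"
proof (rule ccontr)
  assume n: "\<not> ?thesis"
  have s: "vec.subspace Z" and d: "vec.dim Z \<le> 2" using assms unfolding codim_ge2_linear_def by auto
  have "x \<in> Z" for x
  proof (cases "x = 0")
    case True then show ?thesis using vec.subspace_0[OF s] by simp
  next
    case False then show ?thesis using n by blast
  qed
  then have "Z = UNIV" by blast
  then have "vec.dim Z = 4" using vec_dim_card[where 'a=complex and 'n=4] by simp
  then show False using d by simp
qed

lemma loc_inj_I: assumes d: "vec.dim {l. Am R *v l = 0} \<le> 2" shows "locally_injective R"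
proof -
  have "vec.subspace {l. Am R *v l = 0}" by (rule vec.subspace_kernel)
  moreover have "\<forall>l. l \<noteq> 0 \<and> l \<notin> {l. Am R *v l = 0} \<longrightarrow> inj (comb_f R l)"
    using inj_comb_f by blast
  ultimately show ?thesis using d unfolding locally_injective_def codim_ge2_linear_def by blast
qed

lemma loc_inj_D: assumes "locally_injective R" shows "Am R \<noteq> 0"
proof
  assume A: "Am R = 0"
  obtain Z where Z: "codim_ge2_linear Z" "\<forall>l. l \<noteq> 0 \<and> l \<notin> Z \<longrightarrow> inj (comb_f R l)"
    using assms unfolding locally_injective_def by blast
  obtain l where "l \<noteq> 0" "l \<notin> Z" using codim_nonfull[OF Z(1)] by blast
  then have "inj (comb_f R l)" using Z(2) by blast
  then show False using A by (simp add: inj_comb_f)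
qed

lemma loc_surj_I: assumes d: "vec.dim {l. transpose (Bm R) *v l = 0} \<le> 2" shows "locally_surjective R"
proof -
  have "vec.subspace {l. transpose (Bm R) *v l = 0}" by (rule vec.subspace_kernel)
  moreover have "\<forall>l. l \<noteq> 0 \<and> l \<notin> {l. transpose (Bm R) *v l = 0} \<longrightarrow> surj (comb_g R l)"
    using surj_comb_g by blast
  ultimately show ?thesis using d unfolding locally_surjective_def codim_ge2_linear_def by blast
qed

lemma loc_surj_D: assumes "locally_surjective R" shows "Bm R \<noteq> 0"
proof
  assume A: "Bm R = 0"
  obtain Z where Z: "codim_ge2_linear Z" "\<forall>l. l \<noteq> 0 \<and> l \<notin> Z \<longrightarrow> surj (comb_g R l)"
    using assms unfolding locally_surjective_def by blast
  obtain l where "l \<noteq> 0" "l \<notin> Z" using codim_nonfull[OF Z(1)] by blast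
  then have "surj (comb_g R l)" using Z(2) by blast
  then show False using A by (simp add: surj_comb_g)
qed

lemma inj_inv: "inj ((*v) (Y::complex^4^4)) \<longleftrightarrow> invertible Y"
  by (simp only: invertible_left_inverse matrix_left_invertible_injective)

lemma inv_transpose: assumes "invertible (X::complex^4^4)" shows "invertible (transpose X)"
proof -
  obtain C where C: "X ** C = mat 1" using assms invertible_right_inverse by blast
  have "transpose C ** transpose X = mat 1"
    by (metis C matrix_transpose_mul transpose_mat)
  then show ?thesis using invertible_left_inverse by blast
qed

lemma inj_transpose: "inj ((*v) (transpose (X::complex^4^4))) \<longleftrightarrow> inj ((*v) X)"
proof -
  have "invertible (transpose X) \<longleftrightarrow> invertible X"
    using inv_transpose[of X] inv_transpose[of "transpose X"] by (auto simp only: transpose_transpose)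
  then show ?thesis by (simp only: inj_inv)
qed

lemma UNIV1_ne: "(UNIV::(complex^1) set) \<noteq> {0}"
proof
  assume "(UNIV::(complex^1) set) = {0}"
  then have "(1::complex^1) = 0" by blast
  then show False by (simp add: vec_eq_iff)
qed

lemma UNIV4_ne: "(UNIV::(complex^4) set) \<noteq> {0}"
proof
  assume "(UNIV::(complex^4) set) = {0}"
  then have "(1::complex^4) = 0" by blast
  then show False by (simp add: vec_eq_iff)
qed

lemma subrep_theta:
  assumes "theta_semistable th R" "is_subrep R W1 W0 W2"
    "\<not> (W1 = {0} \<and> W0 = {0} \<and> W2 = {0})" "\<not> (W1 = UNIV \<and> W0 = UNIV \<and> W2 = UNIV)"
  shows "fst th * real (vec.dim W1) + fst (snd th) * real (vec.dim W0) + snd (snd th) * real (vec.dim W2) \<le> 0"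
  using assms unfolding theta_semistable_def theta_dot_def by auto

lemma case1:
  fixes \<alpha> \<gamma> :: real
  assumes a: "\<alpha> > 0" "\<gamma> < 0" "\<gamma> < - \<alpha>" and rel: "satisfies_relations R"
  shows "theta_semistable (\<alpha>, - (\<alpha> + \<gamma>) / 4, \<gamma>) R \<longleftrightarrow> globally_surjective R \<and> locally_injective R"
proof -
  define A where "A = Am R"
  define B where "B = Bm R"
  define \<beta> where "\<beta> = - (\<alpha> + \<gamma>) / 4"
  have sk: "\<forall>i j. (B**A)$i$j + (B**A)$j$i = 0" using rel_eq[OF rel] A_def B_def by simp
  have beta: "\<beta> > 0" using a unfolding \<beta>_def by simp
  have gs: "globally_surjective R \<longleftrightarrow> inj ((*v) (transpose B))"
    unfolding globally_surjective_def surj_comb_g B_def vec.inj_iff_eq_0 by auto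
  show ?thesis unfolding \<beta>_def[symmetric]
  proof
    assume ss: "theta_semistable (\<alpha>, \<beta>, \<gamma>) R"
    note sub = subrep_theta[OF ss, simplified]
    have injB: "inj ((*v) B)"
    proof (rule ccontr)
      assume "\<not> inj ((*v) B)"
      then obtain w where w: "B *v w = 0" "w \<noteq> 0" by (auto simp: vec.inj_iff_eq_0)
      define K where "K = {x. B *v x = 0}"
      have sK: "vec.subspace K" unfolding K_def by (rule vec.subspace_kernel)
      have "is_subrep R {0} K {0}" unfolding is_subrep_def
      proof (intro conjI)
        show "\<forall>i. \<forall>w\<in>K. snd R i *v w \<in> {0}"
          by (auto simp: K_def snd_act B_def[symmetric] vec_eq_iff)
        show "\<forall>i. \<forall>w\<in>{0}. fst R i *v w \<in> K" by (simp add: K_def)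
      qed (simp_all add: vec.subspace_single_0 sK)
      moreover have "K \<noteq> {0}" using w K_def by auto
      ultimately have "\<beta> * real (vec.dim K) \<le> 0" using sub[of "{0}" K "{0}"] UNIV1_ne by auto
      then have "vec.dim K = 0" using beta by (simp add: mult_le_0_iff)
      then have "K \<subseteq> {0}" by simp
      then show False using w K_def by auto
    qed
    then have injBt: "inj ((*v) (transpose B))" by (simp add: inj_transpose)
    have A0: "A \<noteq> 0"
    proof
      assume A0: "A = 0"
      have "is_subrep R UNIV {0} {0}" unfolding is_subrep_def
        by (auto simp: fst_act A_def[symmetric] A0 column_def snd_act vec.subspace_single_0 vec_eq_iff)
      then have "\<alpha> * real (vec.dim (UNIV::(complex^1) set)) \<le> 0"
        using sub[of UNIV "{0}" "{0}"] UNIV1_ne UNIV4_ne by auto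
      then show False using a by (simp add: card_cart_basis)
    qed
    obtain C where C: "C ** B = mat 1" using injB matrix_left_invertible_injective by blast
    have M0: "B ** A \<noteq> 0"
    proof
      assume "B ** A = 0"
      then have "C ** (B ** A) = 0" by simp
      then have "A = 0" by (simp add: matrix_mul_assoc C matrix_mul_lid)
      then show False using A0 by simp
    qed
    have null: "{l. A *v l = 0} = {l. (B ** A) *v l = 0}"
      using injB by (auto simp: matrix_vector_mul_assoc[symmetric] vec.inj_iff_eq_0)
    have "locally_injective R"
      using loc_inj_I skew_null[OF sk M0] null A_def by simp
    then show "globally_surjective R \<and> locally_injective R" using gs injBt by simp
  next
    assume h: "globally_surjective R \<and> locally_injective R"
    then have injB: "inj ((*v) B)" using gs inj_transpose by simp
    have A0: "A \<noteq> 0" using h loc_inj_D A_def by simp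
    show "theta_semistable (\<alpha>, \<beta>, \<gamma>) R"
      unfolding theta_semistable_def
    proof (intro conjI allI impI)
      show "theta_dot (\<alpha>, \<beta>, \<gamma>) (1, 4, 1) = 0" by (simp add: theta_dot_def \<beta>_def field_simps)
    next
      fix W1 W0 W2
      assume "is_subrep R W1 W0 W2 \<and> \<not> (W1 = {0} \<and> W0 = {0} \<and> W2 = {0}) \<and> \<not> (W1 = UNIV \<and> W0 = UNIV \<and> W2 = UNIV)"
      then have sr: "is_subrep R W1 W0 W2" and nz: "\<not> (W1 = {0} \<and> W0 = {0} \<and> W2 = {0})" by auto
      from sr have s1: "vec.subspace W1" and s0: "vec.subspace W0" and s2: "vec.subspace W2"
        and act1: "\<forall>i. \<forall>w\<in>W1. fst R i *v w \<in> W0" and act2: "\<forall>i. \<forall>w\<in>W0. snd R i *v w \<in> W2"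
        unfolding is_subrep_def by auto
      have d1: "real (vec.dim W1) \<le> 1" using dim_subset_UNIV_cart_gen[of W1] by simp
      have d0: "real (vec.dim W0) \<le> 4" using dim_subset_UNIV_cart_gen[of W0] by simp
      have d2: "real (vec.dim W2) \<le> 1" using dim_subset_UNIV_cart_gen[of W2] by simp
      show "theta_dot (\<alpha>, \<beta>, \<gamma>) (vec.dim W1, vec.dim W0, vec.dim W2) \<le> 0"
      proof (cases "W2 = {0}")
        case False
        then have "vec.dim W2 \<noteq> 0" using s2 vec.subspace_0 by auto
        then have e2: "real (vec.dim W2) = 1" using d2 by linarith
        have "\<alpha> * real (vec.dim W1) \<le> \<alpha> * 1" using d1 a by (intro mult_left_mono) auto
        moreover have "\<beta> * real (vec.dim W0) \<le> \<beta> * 4" using d0 beta by (intro mult_left_mono) auto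
        moreover have "\<alpha> + \<beta> * 4 + \<gamma> = 0" by (simp add: \<beta>_def field_simps)
        ultimately show ?thesis unfolding theta_dot_def using e2 by simp
      next
        case True
        have "W0 \<subseteq> {0}"
        proof
          fix w assume w: "w \<in> W0"
          have "(B *v w) $ i = 0" for i using act2 w True by (auto simp: snd_act B_def vec_eq_iff)
          then have "B *v w = 0" by (simp add: vec_eq_iff)
          then show "w \<in> {0}" using injB by (simp add: vec.inj_iff_eq_0)
        qed
        then have W0: "W0 = {0}" using s0 vec.subspace_0 by auto
        then have "W1 \<noteq> {0}" using nz True by auto
        then obtain w where w: "w \<in> W1" "w \<noteq> 0" using s1 vec.subspace_0 by blast
        have "column i A = 0" for i
        proof -
          have "w$1 *s column i A = 0" using act1 w W0 by (auto simp: fst_act A_def)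
          then show ?thesis using nz1[OF w(2)] by (simp add: vec_eq_iff)
        qed
        then have "A = 0" by (simp add: vec_eq_iff column_def)
        then show ?thesis using A0 by simp
      qed
    qed
  qed
qed


lemma case2:
  fixes \<alpha> \<gamma> :: real
  assumes a: "\<alpha> > 0" "\<gamma> < 0" "\<gamma> > - \<alpha>" and rel: "satisfies_relations R"
  shows "theta_semistable (\<alpha>, - (\<alpha> + \<gamma>) / 4, \<gamma>) R \<longleftrightarrow> globally_injective R \<and> locally_surjective R"
proof -
  define A where "A = Am R"
  define B where "B = Bm R"
  define \<beta> where "\<beta> = - (\<alpha> + \<gamma>) / 4"
  have sk: "\<forall>i j. (B**A)$i$j + (B**A)$j$i = 0" using rel_eq[OF rel] A_def B_def by simp
  have beta: "\<beta> < 0" using a unfolding \<beta>_def by simp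
  have b4: "\<alpha> + \<beta> * 4 + \<gamma> = 0" by (simp add: \<beta>_def field_simps)
  have gi: "globally_injective R \<longleftrightarrow> inj ((*v) A)"
    unfolding globally_injective_def inj_comb_f A_def vec.inj_iff_eq_0 by auto
  have colA: "column i A \<in> range ((*v) A)" for i
  proof -
    have "A *v axis i 1 = column i A" by (rule mvb)
    then show ?thesis by (metis rangeI)
  qed
  show ?thesis unfolding \<beta>_def[symmetric]
  proof
    assume ss: "theta_semistable (\<alpha>, \<beta>, \<gamma>) R"
    note sub = subrep_theta[OF ss, simplified]
    have injA: "inj ((*v) A)"
    proof (rule ccontr)
      assume "\<not> inj ((*v) A)"
      then have ns: "\<not> surj ((*v) A)" using vec.linear_surj_imp_inj[OF matrix_vector_mul_linear_gen] by blast
      define W where "W = range ((*v) A)"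
      have sW: "vec.subspace W" unfolding W_def by (rule vec.subspace_image[OF vec.subspace_UNIV])
      have "is_subrep R UNIV W UNIV" unfolding is_subrep_def
      proof (intro conjI)
        show "\<forall>i. \<forall>w\<in>UNIV. fst R i *v w \<in> W"
        proof (intro allI ballI)
          fix i and w :: "complex^1"
          have "column i A \<in> W" using colA W_def by simp
          then have "(w$1) *s column i A \<in> W" by (rule vec.subspace_scale[OF sW])
          then show "fst R i *v w \<in> W" by (simp add: fst_act A_def)
        qed
      qed (simp_all add: sW)
      moreover have "W \<noteq> UNIV" using ns W_def by simp
      ultimately have le: "\<alpha> + \<beta> * real (vec.dim W) + \<gamma> \<le> 0"
        using sub[of UNIV W UNIV] UNIV1_ne by (auto simp: card_cart_basis)
      have "vec.dim W \<noteq> 4"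
      proof
        assume "vec.dim W = 4"
        moreover have "vec.dim (UNIV::(complex^4) set) = 4" by (simp add: card_cart_basis)
        ultimately have "vec.span W = vec.span UNIV"
          by (intro vec.dim_eq_span) simp_all
        moreover have "vec.span W = W" using sW by (simp add: vec.span_eq_iff)
        ultimately show False using \<open>W \<noteq> UNIV\<close> by (simp add: vec.span_UNIV)
      qed
      then have "real (vec.dim W) \<le> 3" using dim_subset_UNIV_cart_gen[of W] by simp
      then have "\<beta> * real (vec.dim W) \<ge> \<beta> * 3" using beta by (intro mult_left_mono_neg) auto
      then show False using le b4 beta by linarith
    qed
    have B0: "B \<noteq> 0"
    proof
      assume B0: "B = 0"
      have "is_subrep R UNIV UNIV {0}" unfolding is_subrep_def
        by (auto simp: snd_act B_def[symmetric] B0 vec.subspace_single_0 vec_eq_iff)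
      then have "\<alpha> + \<beta> * 4 \<le> 0"
        using sub[of UNIV UNIV "{0}"] UNIV1_ne by (auto simp: card_cart_basis)
      then show False using b4 a by linarith
    qed
    have injAt: "inj ((*v) (transpose A))" using injA by (simp add: inj_transpose)
    have "invertible A" using injA invertible_left_inverse matrix_left_invertible_injective by blast
    then obtain C where C: "A ** C = mat 1" using invertible_right_inverse by blast
    have M0: "transpose (B ** A) \<noteq> 0"
    proof
      assume "transpose (B ** A) = 0"
      then have "B ** A = 0" by (simp add: vec_eq_iff transpose_def)
      then have "(B ** A) ** C = 0" by simp
      then have "B = 0" by (simp add: matrix_mul_assoc[symmetric] C matrix_mul_rid)
      then show False using B0 by simp
    qed
    have skt: "\<forall>i j. (transpose (B**A))$i$j + (transpose (B**A))$j$i = 0"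
      using sk by (simp add: transpose_def add.commute)
    have null: "{l. transpose B *v l = 0} = {l. transpose (B ** A) *v l = 0}"
    proof -
      have e: "transpose (B ** A) *v l = transpose A *v (transpose B *v l)" for l
        by (simp only: matrix_transpose_mul matrix_vector_mul_assoc)
      have i0: "\<forall>x. transpose A *v x = 0 \<longrightarrow> x = 0"
        using injAt by (simp only: vec.inj_iff_eq_0)
      have "transpose A *v x = 0 \<longleftrightarrow> x = 0" for x
      proof
        assume "transpose A *v x = 0" then show "x = 0" using i0 by blast
      next
        assume "x = 0" then show "transpose A *v x = 0" by (simp only: matrix_vector_mult_0_right)
      qed
      then show ?thesis using e by (simp del: vector_transpose_matrix)
    qed
    have "vec.dim {l. transpose B *v l = 0} \<le> 2"
      unfolding null by (rule skew_null[OF skt M0])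
    then have "vec.dim {l. transpose (Bm R) *v l = 0} \<le> 2" by (simp only: B_def)
    then have "locally_surjective R" by (rule loc_surj_I)
    then show "globally_injective R \<and> locally_surjective R" using gi injA by simp
  next
    assume h: "globally_injective R \<and> locally_surjective R"
    then have injA: "inj ((*v) A)" using gi by simp
    then have "invertible A" using invertible_left_inverse matrix_left_invertible_injective by blast
    then have surjA: "surj ((*v) A)" using invertible_right_inverse matrix_right_invertible_surjective by blast
    have B0: "B \<noteq> 0" using h loc_surj_D B_def by simp
    show "theta_semistable (\<alpha>, \<beta>, \<gamma>) R"
      unfolding theta_semistable_def
    proof (intro conjI allI impI)
      show "theta_dot (\<alpha>, \<beta>, \<gamma>) (1, 4, 1) = 0" using b4 by (simp add: theta_dot_def)
    next
      fix W1 W0 W2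
      assume "is_subrep R W1 W0 W2 \<and> \<not> (W1 = {0} \<and> W0 = {0} \<and> W2 = {0}) \<and> \<not> (W1 = UNIV \<and> W0 = UNIV \<and> W2 = UNIV)"
      then have sr: "is_subrep R W1 W0 W2" and nf: "\<not> (W1 = UNIV \<and> W0 = UNIV \<and> W2 = UNIV)" by auto
      from sr have s1: "vec.subspace W1" and s0: "vec.subspace W0" and s2: "vec.subspace W2"
        and act1: "\<forall>i. \<forall>w\<in>W1. fst R i *v w \<in> W0" and act2: "\<forall>i. \<forall>w\<in>W0. snd R i *v w \<in> W2"
        unfolding is_subrep_def by auto
      show "theta_dot (\<alpha>, \<beta>, \<gamma>) (vec.dim W1, vec.dim W0, vec.dim W2) \<le> 0"
      proof (cases "W1 = {0}")
        case True
        have "\<beta> * real (vec.dim W0) \<le> 0" using beta by (simp add: mult_nonpos_nonneg)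
        moreover have "\<gamma> * real (vec.dim W2) \<le> 0" using a by (simp add: mult_nonpos_nonneg)
        ultimately show ?thesis using True by (simp add: theta_dot_def)
      next
        case False
        then obtain w where w: "w \<in> W1" "w \<noteq> 0" using s1 vec.subspace_0 by blast
        have W1: "W1 = UNIV" using sub1[OF s1 False] .
        have col: "column i A \<in> W0" for i
        proof -
          have "w$1 *s column i A \<in> W0" using act1 w by (auto simp: fst_act A_def)
          then have "(1 / w$1) *s (w$1 *s column i A) \<in> W0" by (rule vec.subspace_scale[OF s0])
          then show ?thesis using nz1[OF w(2)] by simp
        qed
        have AW: "A *v l \<in> W0" for l
          unfolding matrix_mult_sum
          by (rule vec.subspace_sum[OF s0]) (auto intro: vec.subspace_scale[OF s0] col)
        have W0: "W0 = UNIV"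
        proof (rule sym, rule UNIV_eq_I)
          fix y
          obtain x where "y = A *v x" using surjA by (blast dest: surjD)
          then show "y \<in> W0" using AW by simp
        qed
        show ?thesis
        proof (cases "W2 = {0}")
          case True
          have "B *v x = 0" for x
          proof -
            have "(B *v x) $ i = 0" for i using act2 W0 True by (auto simp: snd_act B_def vec_eq_iff)
            then show ?thesis by (simp add: vec_eq_iff)
          qed
          then have "column k B = 0" for k using mvb[of B k] by simp
          then have "B = 0" by (simp add: vec_eq_iff column_def)
          then show ?thesis using B0 by simp
        next
          case False
          then have "W2 = UNIV" using sub1[OF s2] by simp
          then show ?thesis using nf W0 W1 by simp
        qed
      qed
    qed
  qed
qed


theorem mainTheorem2:
  fixes \<alpha> \<gamma> :: real
  assumes "\<alpha> > 0" and "\<gamma> < 0"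
  shows "(\<gamma> < - \<alpha> \<longrightarrow>
            (\<forall>R. satisfies_relations R \<longrightarrow>
               (theta_semistable (\<alpha>, - (\<alpha> + \<gamma>) / 4, \<gamma>) R \<longleftrightarrow>
                  globally_surjective R \<and> locally_injective R)))
       \<and> (\<gamma> > - \<alpha> \<longrightarrow>
            (\<forall>R. satisfies_relations R \<longrightarrow>
               (theta_semistable (\<alpha>, - (\<alpha> + \<gamma>) / 4, \<gamma>) R \<longleftrightarrow>
                  globally_injective R \<and> locally_surjective R)))"
  using case1[OF assms] case2[OF assms] by blast

end
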